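(* Let $X$ be a locally convex space and let $T\in\mathcal{M}(X)$. Assume that for every open convex $V\subset X$ with $V\cap D(T)\neq\emptyset$ one has $\operatorname{Pr}_{X}[\varphi_{T|_{V}}<c]\cap V\subset\overline{D(T)}$. Then $\overline{D(T)}$ is convex. In particular, if $T\in\mathcal{M}(X)$ is locatable in $\overline{D(T)}$, or if $T\in\mathcal{M}(X)$ is locally-NI, then $\overline{D(T)}$ is convex.
   Context: $X$ is a non-trivial Hausdorff locally convex space, $X^*$ its dual with weak-star topology, $c(x,x^* )=\langle x,x^*\rangle$ on $Z=X\times X^*$. Operators are identified with their graphs; $D(T)$ is the domain, $\overline{D(T)}$ its closure; $T|_V$ has graph $\operatorname{Graph}T\cap(V\times X^* )$. $\varphi_{T}(x,x^{*})=\sup\{\langle x,u^{*}\rangle+\langle u,x^{*}\rangle-\langle u,u^{*}\rangle\mid(u,u^{*})\in T\}$ ($\sup\emptyset=-\infty$). $[f<g]=\{z\mid f(z)<g(z)\}$, etc. $\mathcal{M}(X)$: monotone operators with non-empty graph. $V$ locates $T$ in $S$ if $\operatorname{Pr}_X([\varphi_{T|_V}\le c])\cap V\subset S$; $T$ is locatable in $S$ if every open convex $V$ with $V\cap D(T)\ne\emptyset$ locates $T$ in $S$. $T$ is $V$-NI if $\varphi_{T|_V}\ge c$ on $V\times X^*$; locally-NI if $T$ is $V$-NI for every open convex $V$ with $V\cap D(T)\neq\emptyset$. *)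

theory Defs
  imports "HOL-Analysis.Analysis"
begin

definition lcs :: "'x::real_vector topology \<Rightarrow> bool" where
  "lcs tau \<longleftrightarrow> topspace tau = UNIV
     \<and> Hausdorff_space tau
     \<and> (\<exists>x::'x. x \<noteq> 0)
     \<and> continuous_map (prod_topology tau tau) tau (\<lambda>(x, y). x + y)
     \<and> continuous_map (prod_topology euclideanreal tau) tau (\<lambda>(a, x). a *\<^sub>R x)
     \<and> (\<forall>x U. openin tau U \<and> x \<in> U \<longrightarrow>
           (\<exists>W. openin tau W \<and> convex W \<and> x \<in> W \<and> W \<subseteq> U))"

definition dual :: "'x::real_vector topology \<Rightarrow> ('x \<Rightarrow> real) set" where
  "dual tau = {f. linear f \<and> continuous_map tau euclideanreal f}"

definition cpl :: "'x \<times> ('x \<Rightarrow> real) \<Rightarrow> real" where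
  "cpl z = snd z (fst z)"

text \<open>Fitzpatrick function, with sup over the empty set = -infinity.\<close>
definition fitz :: "('x::real_vector \<times> ('x \<Rightarrow> real)) set \<Rightarrow> 'x \<times> ('x \<Rightarrow> real) \<Rightarrow> ereal" where
  "fitz T z = Sup ((\<lambda>(u, us). ereal (us (fst z) + snd z u - us u)) ` T)"

definition restr :: "('x \<times> ('x \<Rightarrow> real)) set \<Rightarrow> 'x set \<Rightarrow> ('x \<times> ('x \<Rightarrow> real)) set" where
  "restr T V = T \<inter> (V \<times> UNIV)"

definition monotone_op :: "('x::real_vector \<times> ('x \<Rightarrow> real)) set \<Rightarrow> bool" where
  "monotone_op T \<longleftrightarrow> (\<forall>(x, xs)\<in>T. \<forall>(y, ys)\<in>T. 0 \<le> xs x - xs y - ys x + ys y)"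

definition MX :: "'x::real_vector topology \<Rightarrow> ('x \<times> ('x \<Rightarrow> real)) set set" where
  "MX tau = {T. T \<subseteq> UNIV \<times> dual tau \<and> monotone_op T \<and> T \<noteq> {}}"

text \<open>Pr_X [phi_{T|V} < c] and Pr_X [phi_{T|V} \<le> c], with z ranging over X \<times> X^*.\<close>
definition prX_lt :: "'x::real_vector topology \<Rightarrow> ('x \<times> ('x \<Rightarrow> real)) set \<Rightarrow> 'x set \<Rightarrow> 'x set" where
  "prX_lt tau T V = {x. \<exists>xs\<in>dual tau. fitz (restr T V) (x, xs) < ereal (cpl (x, xs))}"

definition prX_le :: "'x::real_vector topology \<Rightarrow> ('x \<times> ('x \<Rightarrow> real)) set \<Rightarrow> 'x set \<Rightarrow> 'x set" where
  "prX_le tau T V = {x. \<exists>xs\<in>dual tau. fitz (restr T V) (x, xs) \<le> ereal (cpl (x, xs))}"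

definition locates :: "'x::real_vector topology \<Rightarrow> 'x set \<Rightarrow> ('x \<times> ('x \<Rightarrow> real)) set \<Rightarrow> 'x set \<Rightarrow> bool" where
  "locates tau V T S \<longleftrightarrow> prX_le tau T V \<inter> V \<subseteq> S"

definition locatable :: "'x::real_vector topology \<Rightarrow> ('x \<times> ('x \<Rightarrow> real)) set \<Rightarrow> 'x set \<Rightarrow> bool" where
  "locatable tau T S \<longleftrightarrow>
     (\<forall>V. openin tau V \<and> convex V \<and> V \<inter> Domain T \<noteq> {} \<longrightarrow> locates tau V T S)"

definition V_NI :: "'x::real_vector topology \<Rightarrow> 'x set \<Rightarrow> ('x \<times> ('x \<Rightarrow> real)) set \<Rightarrow> bool" where
  "V_NI tau V T \<longleftrightarrow> (\<forall>x\<in>V. \<forall>xs\<in>dual tau. ereal (cpl (x, xs)) \<le> fitz (restr T V) (x, xs))"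

definition locally_NI :: "'x::real_vector topology \<Rightarrow> ('x \<times> ('x \<Rightarrow> real)) set \<Rightarrow> bool" where
  "locally_NI tau T \<longleftrightarrow>
     (\<forall>V. openin tau V \<and> convex V \<and> V \<inter> Domain T \<noteq> {} \<longrightarrow> V_NI tau V T)"

end

theory Submission
  imports Defs
begin


lemma lcs_top: "lcs tau \<Longrightarrow> topspace tau = UNIV"
  by (simp add: lcs_def)

lemma lcs_scale_cont: "lcs tau \<Longrightarrow> continuous_map (prod_topology euclideanreal tau) tau (\<lambda>(a, x). a *\<^sub>R x)"
  by (simp add: lcs_def)

lemma lcs_add_cont: "lcs tau \<Longrightarrow> continuous_map (prod_topology tau tau) tau (\<lambda>(x, y). x + y)"
  by (simp add: lcs_def)

lemma lcs_convex_nbhd: "lcs tau \<Longrightarrow> openin tau U \<Longrightarrow> x \<in> U \<Longrightarrow>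
   \<exists>W. openin tau W \<and> convex W \<and> x \<in> W \<and> W \<subseteq> U"
  by (simp add: lcs_def)

lemma lcs_affine_cont:
  assumes "lcs tau"
  shows "continuous_map tau tau (\<lambda>v. a *\<^sub>R v + b)"
proof -
  have t: "topspace tau = UNIV" using assms by (simp add: lcs_def)
  have "continuous_map tau (prod_topology euclideanreal tau) (\<lambda>v. (a, v))"
    by (intro continuous_map_pairedI) (auto simp: t)
  then have "continuous_map tau tau ((\<lambda>(a, x). a *\<^sub>R x) \<circ> (\<lambda>v. (a, v)))"
    by (rule continuous_map_compose[OF _ lcs_scale_cont[OF assms]])
  then have c1: "continuous_map tau tau (\<lambda>v. a *\<^sub>R v)"
    by (simp add: o_def)
  have "continuous_map tau (prod_topology tau tau) (\<lambda>v. (a *\<^sub>R v, b))"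
    by (intro continuous_map_pairedI c1) (auto simp: t)
  then have "continuous_map tau tau ((\<lambda>(x, y). x + y) \<circ> (\<lambda>v. (a *\<^sub>R v, b)))"
    by (rule continuous_map_compose[OF _ lcs_add_cont[OF assms]])
  then show ?thesis by (simp add: o_def)
qed

lemma lcs_open_affine_preimage:
  assumes "lcs tau" "openin tau U"
  shows "openin tau {v. a *\<^sub>R v + b \<in> U}"
  using openin_continuous_map_preimage[OF lcs_affine_cont[OF assms(1)] assms(2)]
  by (simp add: lcs_top[OF assms(1)])

lemma lcs_scale_at:
  assumes "lcs tau" "openin tau N" "c0 *\<^sub>R d \<in> N"
  shows "\<exists>r>0. \<exists>Ob. openin tau Ob \<and> d \<in> Ob \<and> (\<forall>c y. \<bar>c - c0\<bar> < r \<and> y \<in> Ob \<longrightarrow> c *\<^sub>R y \<in> N)"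
proof -
  have "openin (prod_topology euclideanreal tau)
     {p \<in> topspace (prod_topology euclideanreal tau). (\<lambda>(a, x). a *\<^sub>R x) p \<in> N}"
    by (rule openin_continuous_map_preimage[OF lcs_scale_cont[OF assms(1)] assms(2)])
  then have "openin (prod_topology euclideanreal tau) {(a, x). a *\<^sub>R x \<in> N}"
    by (simp add: lcs_top[OF assms(1)] case_prod_unfold)
  moreover have "(c0, d) \<in> {(a, x). a *\<^sub>R x \<in> N}" using assms(3) by simp
  ultimately obtain U Ob where UO: "openin euclideanreal U" "openin tau Ob" "c0 \<in> U" "d \<in> Ob"
      "U \<times> Ob \<subseteq> {(a, x). a *\<^sub>R x \<in> N}"
    unfolding openin_prod_topology_alt by meson
  obtain r where r: "r > 0" "ball c0 r \<subseteq> U"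
    using UO(1,3) open_contains_ball[of U] by auto
  show ?thesis
  proof (intro exI conjI allI impI)
    show "r > 0" by fact
    show "openin tau Ob" "d \<in> Ob" by fact+
    fix c y assume "\<bar>c - c0\<bar> < r \<and> y \<in> Ob"
    then have "c \<in> U" "y \<in> Ob" using r by (auto simp: dist_real_def abs_minus_commute)
    then show "c *\<^sub>R y \<in> N" using UO(5) by blast
  qed
qed



definition hb_good :: "('x::real_vector \<Rightarrow> real) \<Rightarrow> ('x \<times> real) set \<Rightarrow> ('x \<times> real) set \<Rightarrow> bool" where
 "hb_good p G0 G \<longleftrightarrow> G0 \<subseteq> G \<and> (\<forall>v r v' r'. (v,r) \<in> G \<and> (v',r') \<in> G \<longrightarrow> (v+v', r+r') \<in> G)
    \<and> (\<forall>v r c. (v,r) \<in> G \<longrightarrow> (c *\<^sub>R v, c*r) \<in> G)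
    \<and> (\<forall>v r r'. (v,r) \<in> G \<and> (v,r') \<in> G \<longrightarrow> r = r')
    \<and> (\<forall>v r. (v,r) \<in> G \<longrightarrow> r \<le> p v)"

lemma hb_goodD:
  assumes "hb_good p G0 G"
  shows "G0 \<subseteq> G" "\<And>v r v' r'. (v,r) \<in> G \<Longrightarrow> (v',r') \<in> G \<Longrightarrow> (v+v', r+r') \<in> G"
    "\<And>v r c. (v,r) \<in> G \<Longrightarrow> (c *\<^sub>R v, c*r) \<in> G"
    "\<And>v r r'. (v,r) \<in> G \<Longrightarrow> (v,r') \<in> G \<Longrightarrow> r = r'"
    "\<And>v r. (v,r) \<in> G \<Longrightarrow> r \<le> p v"
  using assms unfolding hb_good_def by blast+

lemma hb_chain:
  assumes C: "C \<in> chains {G. hb_good p G0 G}" "C \<noteq> {}"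
  shows "hb_good p G0 (\<Union>C)"
proof -
  have gd: "\<And>G. G \<in> C \<Longrightarrow> hb_good p G0 G" using C(1) by (auto simp: chains_def)
  have ch: "\<And>G H. G \<in> C \<Longrightarrow> H \<in> C \<Longrightarrow> G \<subseteq> H \<or> H \<subseteq> G" using C(1) by (auto simp: chains_def chain_subset_def)
  have two: "\<exists>K\<in>C. a \<in> K \<and> b \<in> K" if ab: "a \<in> \<Union>C" "b \<in> \<Union>C" for a b
  proof -
    obtain G H where "G \<in> C" "H \<in> C" "a \<in> G" "b \<in> H" using ab by blast
    then show ?thesis using ch[of G H] by blast
  qed
  obtain G1 where "G1 \<in> C" using C(2) by blast
  show ?thesis unfolding hb_good_def
  proof (intro conjI allI impI)
    show "G0 \<subseteq> \<Union>C" using hb_goodD(1)[OF gd[OF \<open>G1 \<in> C\<close>]] \<open>G1 \<in> C\<close> by blast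
  next
    fix v r v' r' assume "(v, r) \<in> \<Union>C \<and> (v', r') \<in> \<Union>C"
    then obtain K where "K \<in> C" "(v,r) \<in> K" "(v',r') \<in> K" using two by blast
    then show "(v + v', r + r') \<in> \<Union>C" using hb_goodD(2)[OF gd[OF \<open>K \<in> C\<close>]] by blast
  next
    fix v r c assume "(v, r) \<in> \<Union>C"
    then obtain G where "G \<in> C" "(v,r) \<in> G" by blast
    then show "(c *\<^sub>R v, c * r) \<in> \<Union>C" using hb_goodD(3)[OF gd[OF \<open>G \<in> C\<close>]] by blast
  next
    fix v r r' assume "(v, r) \<in> \<Union>C \<and> (v, r') \<in> \<Union>C"
    then obtain K where "K \<in> C" "(v,r) \<in> K" "(v,r') \<in> K" using two by blast
    then show "r = r'" using hb_goodD(4)[OF gd[OF \<open>K \<in> C\<close>]] by blast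
  next
    fix v r assume "(v, r) \<in> \<Union>C"
    then obtain G where "G \<in> C" "(v,r) \<in> G" by blast
    then show "r \<le> p v" using hb_goodD(5)[OF gd[OF \<open>G \<in> C\<close>]] by blast
  qed
qed

lemma hb_extend:
  fixes p :: "'x::real_vector \<Rightarrow> real"
  assumes sub: "\<And>v w. p (v + w) \<le> p v + p w"
    and hom: "\<And>c v. c > 0 \<Longrightarrow> p (c *\<^sub>R v) = c * p v"
    and g: "hb_good p G0 M" and nd: "v0 \<notin> Domain M" and ne: "G0 \<noteq> {}"
  shows "\<exists>M'. hb_good p G0 M' \<and> M \<subseteq> M' \<and> M' \<noteq> M"
proof -
  have G0M: "G0 \<subseteq> M" and add: "\<And>v r v' r'. (v,r) \<in> M \<Longrightarrow> (v',r') \<in> M \<Longrightarrow> (v+v', r+r') \<in> M"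
    and scl: "\<And>v r c. (v,r) \<in> M \<Longrightarrow> (c *\<^sub>R v, c*r) \<in> M"
    and fnl: "\<And>v r r'. (v,r) \<in> M \<Longrightarrow> (v,r') \<in> M \<Longrightarrow> r = r'"
    and dom: "\<And>v r. (v,r) \<in> M \<Longrightarrow> r \<le> p v"
    using hb_goodD[OF g] by blast+
  obtain a b where ab: "(a,b) \<in> M" using ne G0M by auto
  have bound: "r' - p (v' - v0) \<le> p (v + v0) - r" if "(v,r) \<in> M" "(v',r') \<in> M" for v r v' r'
  proof -
    have "r + r' \<le> p (v + v')" using dom[OF add[OF that]] .
    also have "v + v' = (v + v0) + (v' - v0)" by simp
    finally have "r + r' \<le> p ((v + v0) + (v' - v0))" .
    with sub[of "v + v0" "v' - v0"] show ?thesis by linarith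
  qed
  define L where "L = (\<lambda>(v,r). r - p (v - v0)) ` M"
  define c where "c = Sup L"
  have bdd: "bdd_above L" unfolding L_def bdd_above_def using bound[OF ab] by (intro exI[of _ "p (a + v0) - b"]) auto
  have Lne: "L \<noteq> {}" using ab unfolding L_def by auto
  have lc: "r - p (v - v0) \<le> c" if "(v,r) \<in> M" for v r
    unfolding c_def by (rule cSup_upper[OF _ bdd]) (use that in \<open>force simp: L_def\<close>)
  have cu: "c \<le> p (v + v0) - r" if "(v,r) \<in> M" for v r
    unfolding c_def by (rule cSup_least[OF Lne]) (use bound[OF that] in \<open>auto simp: L_def\<close>)
  define M' where "M' = {(v + t *\<^sub>R v0, r + t * c) | v r t. (v,r) \<in> M}"
  have inM': "(v + t *\<^sub>R v0, r + t * c) \<in> M'" if "(v,r) \<in> M" for v r t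
    using that unfolding M'_def by blast
  have 00: "(0, 0) \<in> M" using scl[OF ab, of 0] by simp
  have MM': "M \<subseteq> M'"
  proof
    fix z assume "z \<in> M"
    then obtain v r where "z = (v,r)" "(v,r) \<in> M" by (cases z) auto
    then show "z \<in> M'" using inM'[of v r 0] by simp
  qed
  have "(v0, c) \<in> M'" using inM'[OF 00, of 1] by simp
  moreover have "(v0, c) \<notin> M" using nd by (auto simp: Domain_iff)
  ultimately have neq: "M' \<noteq> M" by blast
  have "hb_good p G0 M'" unfolding hb_good_def
  proof (intro conjI allI impI)
    show "G0 \<subseteq> M'" using G0M MM' by blast
  next
    fix v r v' r' assume "(v, r) \<in> M' \<and> (v', r') \<in> M'"
    then obtain w s t w' s' t' where "(w,s) \<in> M" "(w',s') \<in> M" "v = w + t *\<^sub>R v0" "r = s + t * c"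
      "v' = w' + t' *\<^sub>R v0" "r' = s' + t' * c" unfolding M'_def by blast
    then show "(v + v', r + r') \<in> M'"
      using inM'[OF add, of w s w' s' "t + t'"] by (simp add: algebra_simps)
  next
    fix v r k assume "(v, r) \<in> M'"
    then obtain w s t where "(w,s) \<in> M" "v = w + t *\<^sub>R v0" "r = s + t * c" unfolding M'_def by blast
    then show "(k *\<^sub>R v, k * r) \<in> M'"
      using inM'[OF scl, of w s k "k * t"] by (simp add: algebra_simps)
  next
    fix v r r' assume "(v, r) \<in> M' \<and> (v, r') \<in> M'"
    then obtain w s t w' s' t' where ws: "(w,s) \<in> M" "(w',s') \<in> M" "v = w + t *\<^sub>R v0" "r = s + t * c"
      "v = w' + t' *\<^sub>R v0" "r' = s' + t' * c" unfolding M'_def by blast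
    have tt: "t = t'"
    proof (rule ccontr)
      assume "t \<noteq> t'"
      have "(w + (-1) *\<^sub>R w', s + (-1) * s') \<in> M" using add[OF ws(1) scl[OF ws(2)]] .
      then have "((1 / (t' - t)) *\<^sub>R (w + (-1) *\<^sub>R w'), (1 / (t' - t)) * (s + (-1) * s')) \<in> M"
        by (rule scl)
      moreover have "(1 / (t' - t)) *\<^sub>R (w + (-1) *\<^sub>R w') = v0"
      proof -
        have "w - w' = (t' - t) *\<^sub>R v0" using ws(3,5) by (simp add: algebra_simps)
        then show ?thesis using \<open>t \<noteq> t'\<close> by simp
      qed
      ultimately show False using nd by (auto simp: Domain_iff)
    qed
    then have "w = w'" using ws(3,5) by simp
    then show "r = r'" using ws tt fnl by simp
  next
    fix v r assume "(v, r) \<in> M'"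
    then obtain w s t where ws: "(w,s) \<in> M" "v = w + t *\<^sub>R v0" "r = s + t * c" unfolding M'_def by blast
    consider "t > 0" | "t = 0" | "t < 0" by linarith
    then show "r \<le> p v"
    proof cases
      case 1
      have "c \<le> p ((1/t) *\<^sub>R w + v0) - (1/t) * s" using cu[OF scl[OF ws(1)]] .
      then have "t * c \<le> t * p ((1/t) *\<^sub>R w + v0) - s" using 1
        by (simp add: field_simps mult_left_mono)
      also have "t * p ((1/t) *\<^sub>R w + v0) = p (t *\<^sub>R ((1/t) *\<^sub>R w + v0))" using hom[OF 1] by simp
      also have "t *\<^sub>R ((1/t) *\<^sub>R w + v0) = v" using 1 ws(2) by (simp add: scaleR_right_distrib)
      finally show ?thesis using ws(3) by simp
    next
      case 2 then show ?thesis using ws dom by simp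
    next
      case 3
      define u where "u = - t"
      have u: "u > 0" using 3 by (simp add: u_def)
      have "(1/u) * s - p ((1/u) *\<^sub>R w - v0) \<le> c" using lc[OF scl[OF ws(1)]] .
      then have "s - u * p ((1/u) *\<^sub>R w - v0) \<le> u * c" using u
        by (simp add: field_simps mult_left_mono)
      also have "u * p ((1/u) *\<^sub>R w - v0) = p (u *\<^sub>R ((1/u) *\<^sub>R w - v0))" using hom[OF u] by simp
      also have "u *\<^sub>R ((1/u) *\<^sub>R w - v0) = v" using u ws(2) by (simp add: scaleR_diff_right u_def)
      finally show ?thesis using ws(3) by (simp add: u_def)
    qed
  qed
  then show ?thesis using MM' neq by blast
qed


lemma hahn_banach:
  fixes p :: "'x::real_vector \<Rightarrow> real"
  assumes sub: "\<And>v w. p (v + w) \<le> p v + p w"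
    and hom: "\<And>c v. c > 0 \<Longrightarrow> p (c *\<^sub>R v) = c * p v"
    and z: "z \<noteq> 0"
  shows "\<exists>f. linear f \<and> (\<forall>v. f v \<le> p v) \<and> f z = p z"
proof -
  have "p (2 *\<^sub>R 0) = 2 * p 0" by (rule hom) simp
  then have p0: "p 0 = 0" by simp
  define G0 where "G0 = range (\<lambda>t. (t *\<^sub>R z, t * p z))"
  have g0: "hb_good p G0 G0" unfolding hb_good_def
  proof (intro conjI allI impI)
    fix v r v' r' assume "(v, r) \<in> G0 \<and> (v', r') \<in> G0"
    then obtain t t' where "v = t *\<^sub>R z" "r = t * p z" "v' = t' *\<^sub>R z" "r' = t' * p z"
      unfolding G0_def by auto
    then show "(v + v', r + r') \<in> G0" unfolding G0_def
      by (auto intro!: image_eqI[of _ _ "t + t'"] simp: algebra_simps)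
  next
    fix v r c assume "(v, r) \<in> G0"
    then obtain t where "v = t *\<^sub>R z" "r = t * p z" unfolding G0_def by auto
    then show "(c *\<^sub>R v, c * r) \<in> G0" unfolding G0_def
      by (auto intro!: image_eqI[of _ _ "c * t"] simp: algebra_simps)
  next
    fix v r r' assume "(v, r) \<in> G0 \<and> (v, r') \<in> G0"
    then have "\<exists>t. v = t *\<^sub>R z \<and> r = t * p z" "\<exists>t'. v = t' *\<^sub>R z \<and> r' = t' * p z"
      unfolding G0_def by force+
    then obtain t t' where "v = t *\<^sub>R z" "r = t * p z" "v = t' *\<^sub>R z" "r' = t' * p z"
      by blast
    then have "t = t'" using z by (metis scaleR_cancel_right)
    then show "r = r'" using \<open>r = t * p z\<close> \<open>r' = t' * p z\<close> by simp
  next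
    fix v r assume "(v, r) \<in> G0"
    then obtain t where vt: "v = t *\<^sub>R z" "r = t * p z" unfolding G0_def by auto
    consider "t > 0" | "t = 0" | "t < 0" by linarith
    then show "r \<le> p v"
    proof cases
      case 1 then show ?thesis using hom[OF 1, of z] vt by simp
    next
      case 2 then show ?thesis using vt p0 by simp
    next
      case 3
      have "p (t *\<^sub>R z + (-t) *\<^sub>R z) \<le> p (t *\<^sub>R z) + p ((-t) *\<^sub>R z)" by (rule sub)
      moreover have "p ((-t) *\<^sub>R z) = (-t) * p z" using 3 by (intro hom) simp
      moreover have "t *\<^sub>R z + (-t) *\<^sub>R z = 0" by (simp add: scaleR_left_distrib[symmetric])
      ultimately show ?thesis using vt p0 by simp
    qed
  qed simp
  define A where "A = {G. hb_good p G0 G}"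
  have "\<forall>C\<in>chains A. \<exists>U\<in>A. \<forall>X\<in>C. X \<subseteq> U"
  proof
    fix C assume C: "C \<in> chains A"
    show "\<exists>U\<in>A. \<forall>X\<in>C. X \<subseteq> U"
    proof (cases "C = {}")
      case True then show ?thesis using g0 unfolding A_def by auto
    next
      case False then show ?thesis using hb_chain[of C p G0] C unfolding A_def by blast
    qed
  qed
  from Zorn_Lemma2[OF this] obtain M where MA: "M \<in> A" and mx: "\<And>X. X \<in> A \<Longrightarrow> M \<subseteq> X \<Longrightarrow> X = M"
    by blast
  have gM: "hb_good p G0 M" using MA unfolding A_def by simp
  have dom: "v \<in> Domain M" for v
  proof (rule ccontr)
    assume "v \<notin> Domain M"
    from hb_extend[OF sub hom gM this] obtain M' where "hb_good p G0 M'" "M \<subseteq> M'" "M' \<noteq> M"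
      unfolding G0_def by blast
    then show False using mx[of M'] unfolding A_def by blast
  qed
  define f where "f v = (SOME r. (v, r) \<in> M)" for v
  have fM: "(v, f v) \<in> M" for v unfolding f_def using dom[of v] by (auto intro: someI_ex)
  have feq: "f v = r" if "(v, r) \<in> M" for v r using hb_goodD(4)[OF gM fM that] .
  have "linear f"
  proof (rule linearI)
    fix v w show "f (v + w) = f v + f w" by (rule feq, rule hb_goodD(2)[OF gM fM fM])
  next
    fix c v show "f (c *\<^sub>R v) = c *\<^sub>R f v" using feq[OF hb_goodD(3)[OF gM fM[of v], of c]] by simp
  qed
  moreover have "\<forall>v. f v \<le> p v" using hb_goodD(5)[OF gM fM] by blast
  moreover have "f z = p z"
  proof -
    have "(1 *\<^sub>R z, 1 * p z) \<in> G0" unfolding G0_def by blast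
    then have "(z, p z) \<in> M" using hb_goodD(1)[OF gM] by auto
    then show ?thesis by (rule feq)
  qed
  ultimately show ?thesis by blast
qed



definition gauge :: "'x::real_vector set \<Rightarrow> 'x \<Rightarrow> real" where
  "gauge N v = Inf {t. 0 < t \<and> (1/t) *\<^sub>R v \<in> N}"

lemma star_conv: "convex N \<Longrightarrow> 0 \<in> N \<Longrightarrow> y \<in> N \<Longrightarrow> 0 \<le> c \<Longrightarrow> c \<le> 1 \<Longrightarrow> c *\<^sub>R y \<in> N"
  using convexD[of N y 0 c "1 - c"] by simp

locale gauge_ctx =
  fixes tau :: "'x::real_vector topology" and N :: "'x set"
  assumes lcs: "lcs tau" and opn: "openin tau N" and cvx: "convex N" and zero: "0 \<in> N"
begin

lemma absorb: "\<exists>t>0. (1/t) *\<^sub>R v \<in> N"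
proof -
  obtain r Ob where r: "r > 0" "v \<in> Ob" "\<And>c y. \<bar>c - 0\<bar> < r \<and> y \<in> Ob \<Longrightarrow> c *\<^sub>R y \<in> N"
    using lcs_scale_at[OF lcs opn, of 0 v] zero by auto
  have "(r/2) *\<^sub>R v \<in> N" using r by auto
  then show ?thesis using r by (intro exI[of _ "2/r"]) auto
qed

lemma Sne: "{t. 0 < t \<and> (1/t) *\<^sub>R v \<in> N} \<noteq> {}" using absorb[of v] by auto

lemma Sbdd: "bdd_below {t. 0 < t \<and> (1/t) *\<^sub>R v \<in> N}"
  by (rule bdd_belowI[of _ 0]) auto

lemma gauge_nonneg: "0 \<le> gauge N v"
  unfolding gauge_def by (rule cInf_greatest[OF Sne]) auto

lemma gauge_le: "0 < t \<Longrightarrow> (1/t) *\<^sub>R v \<in> N \<Longrightarrow> gauge N v \<le> t"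
  unfolding gauge_def by (rule cInf_lower[OF _ Sbdd]) auto

lemma gauge_lt: assumes "gauge N v < s" shows "(1/s) *\<^sub>R v \<in> N"
proof -
  obtain t where t: "0 < t" "(1/t) *\<^sub>R v \<in> N" "t < s"
    using cInf_lessD[OF Sne assms[unfolded gauge_def]] by auto
  have "0 \<le> t/s" "t/s \<le> 1" using t by auto
  then have "(t/s) *\<^sub>R ((1/t) *\<^sub>R v) \<in> N" using star_conv[OF cvx zero t(2)] by blast
  then show ?thesis using t by simp
qed

lemma gauge_sub: "gauge N (v + w) \<le> gauge N v + gauge N w"
proof (rule field_le_epsilon)
  fix e :: real assume e: "0 < e"
  define s where "s = gauge N v + e/2"
  define s' where "s' = gauge N w + e/2"
  have sp: "s > 0" "s' > 0" using gauge_nonneg[of v] gauge_nonneg[of w] e by (auto simp: s_def s'_def)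
  have a: "(1/s) *\<^sub>R v \<in> N" "(1/s') *\<^sub>R w \<in> N" using e by (auto intro!: gauge_lt simp: s_def s'_def)
  have "(s/(s+s')) *\<^sub>R ((1/s) *\<^sub>R v) + (s'/(s+s')) *\<^sub>R ((1/s') *\<^sub>R w) \<in> N"
  proof (rule convexD[OF cvx a])
    show "0 \<le> s/(s+s')" "0 \<le> s'/(s+s')" using sp by auto
    show "s/(s+s') + s'/(s+s') = 1" using sp by (simp add: add_divide_distrib[symmetric])
  qed
  moreover have "(s/(s+s')) *\<^sub>R ((1/s) *\<^sub>R v) + (s'/(s+s')) *\<^sub>R ((1/s') *\<^sub>R w) = (1/(s+s')) *\<^sub>R (v + w)"
    using sp by (simp add: scaleR_right_distrib)
  ultimately have "gauge N (v + w) \<le> s + s'" using sp by (intro gauge_le) auto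
  then show "gauge N (v + w) \<le> gauge N v + gauge N w + e" by (simp add: s_def s'_def)
qed

lemma gauge_hom_le: assumes c: "c > 0" shows "gauge N (c *\<^sub>R v) \<le> c * gauge N v"
proof -
  have "gauge N (c *\<^sub>R v) \<le> c * gauge N v + e" if e: "e > 0" for e
  proof -
    define s where "s = gauge N v + e/c"
    have sp: "s > 0" using gauge_nonneg[of v] divide_pos_pos[OF e c] by (auto simp: s_def)
    have "(1/s) *\<^sub>R v \<in> N" using divide_pos_pos[OF e c] by (intro gauge_lt) (auto simp: s_def)
    moreover have "(1 / (c * s)) *\<^sub>R (c *\<^sub>R v) = (1/s) *\<^sub>R v" using c by simp
    ultimately have "gauge N (c *\<^sub>R v) \<le> c * s" using sp c by (intro gauge_le) auto
    then show ?thesis using c by (simp add: s_def algebra_simps)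
  qed
  then show ?thesis by (rule field_le_epsilon)
qed

lemma gauge_hom: assumes c: "c > 0" shows "gauge N (c *\<^sub>R v) = c * gauge N v"
proof -
  have "gauge N ((1/c) *\<^sub>R (c *\<^sub>R v)) \<le> (1/c) * gauge N (c *\<^sub>R v)"
    using c by (intro gauge_hom_le) auto
  then have "c * gauge N v \<le> gauge N (c *\<^sub>R v)" using c by (simp add: field_simps)
  with gauge_hom_le[OF c, of v] show ?thesis by linarith
qed

lemma gauge_in_lt1: assumes v: "v \<in> N" shows "gauge N v < 1"
proof -
  obtain r Ob where r: "r > 0" "v \<in> Ob" "\<And>c y. \<bar>c - 1\<bar> < r \<and> y \<in> Ob \<Longrightarrow> c *\<^sub>R y \<in> N"
    using lcs_scale_at[OF lcs opn, of 1 v] v by auto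
  have "(1 + r/2) *\<^sub>R v \<in> N" using r by auto
  then have "gauge N v \<le> 1 / (1 + r/2)" using r by (intro gauge_le) auto
  also have "\<dots> < 1" using r by (simp add: field_simps)
  finally show ?thesis .
qed

lemma gauge_notin: assumes "z \<notin> N" shows "1 \<le> gauge N z"
  using gauge_lt[of z 1] assms by force

end

lemma gauge_sym: assumes "\<And>v. v \<in> N \<Longrightarrow> - v \<in> N" shows "gauge N (- v) = gauge N v"
proof -
  have "{t. 0 < t \<and> (1/t) *\<^sub>R (- v) \<in> N} = {t. 0 < t \<and> (1/t) *\<^sub>R v \<in> N}"
    using assms[of "(1/_) *\<^sub>R v"] assms[of "(1/_) *\<^sub>R (-v)"] by auto
  then show ?thesis by (simp add: gauge_def)
qed

lemma lcs_sep_functional: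
  fixes tau :: "'x::real_vector topology"
  assumes lcs: "lcs tau" and z: "z \<noteq> 0"
  shows "\<exists>f\<in>dual tau. f z = 1"
proof -
  have top: "topspace tau = UNIV" using lcs by (simp add: lcs_def)
  have "Hausdorff_space tau" using lcs by (simp add: lcs_def)
  then obtain U V where UV: "openin tau U" "openin tau V" "0 \<in> U" "z \<in> V" "disjnt U V"
    using z top unfolding Hausdorff_space_def by (metis UNIV_I)
  obtain W where W: "openin tau W" "convex W" "0 \<in> W" "W \<subseteq> U"
    using lcs_convex_nbhd[OF lcs UV(1,3)] by blast
  define N where "N = W \<inter> uminus -` W"
  have eqN: "uminus -` W = {v. (-1) *\<^sub>R v + 0 \<in> W}" by auto
  have Nopen: "openin tau N" unfolding N_def eqN
    by (intro openin_Int W(1) lcs_open_affine_preimage[OF lcs W(1)])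
  have Nconv: "convex N" unfolding N_def
    by (intro convex_Int W(2) convex_linear_vimage linear_uminus)
  have N0: "0 \<in> N" using W(3) by (simp add: N_def)
  have Nsym: "\<And>v. v \<in> N \<Longrightarrow> - v \<in> N" by (auto simp: N_def)
  have zN: "z \<notin> N" using UV(4,5) W(4) by (auto simp: N_def disjnt_def)
  interpret gauge_ctx tau N using lcs Nopen Nconv N0 by unfold_locales
  obtain f where f: "linear f" "\<And>v. f v \<le> gauge N v" "f z = gauge N z"
    using hahn_banach[of "gauge N" z] gauge_sub gauge_hom z by blast
  have fabs: "\<bar>f v\<bar> < 1" if "v \<in> N" for v
  proof -
    have "f v < 1" using f(2)[of v] gauge_in_lt1[OF that] by linarith
    moreover have "- f v < 1"
      using f(2)[of "-v"] gauge_in_lt1[OF Nsym[OF that]] linear_neg[OF f(1), of v] by linarith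
    ultimately show ?thesis by linarith
  qed
  have fcont: "continuous_map tau euclideanreal f"
    unfolding continuous_map_def
  proof (intro conjI allI impI)
    show "f \<in> topspace tau \<rightarrow> topspace euclideanreal" by simp
  next
    fix S :: "real set" assume "openin euclideanreal S"
    then have So: "open S" by simp
    show "openin tau {x \<in> topspace tau. f x \<in> S}"
    proof (subst openin_subopen, intro ballI)
      fix x assume "x \<in> {x \<in> topspace tau. f x \<in> S}"
      then have fx: "f x \<in> S" by simp
      obtain e where e: "e > 0" "ball (f x) e \<subseteq> S" using So fx open_contains_ball by blast
      define T where "T = {w. (1/e) *\<^sub>R w + (- (1/e) *\<^sub>R x) \<in> N}"
      have "openin tau T" unfolding T_def by (rule lcs_open_affine_preimage[OF lcs Nopen])
      moreover have "x \<in> T" using N0 by (simp add: T_def)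
      moreover have "T \<subseteq> {x \<in> topspace tau. f x \<in> S}"
      proof
        fix w assume "w \<in> T"
        then have "(1/e) *\<^sub>R (w - x) \<in> N" by (simp add: T_def scaleR_right_diff_distrib)
        then have "\<bar>f ((1/e) *\<^sub>R (w - x))\<bar> < 1" by (rule fabs)
        then have "\<bar>(1/e) * (f w - f x)\<bar> < 1"
          using linear_scale[OF f(1)] linear_diff[OF f(1)] by simp
        then have "\<bar>f w - f x\<bar> < e" using e by (simp add: abs_mult field_simps)
        then have "f w \<in> ball (f x) e" by (simp add: dist_real_def abs_minus_commute)
        then show "w \<in> {x \<in> topspace tau. f x \<in> S}" using e top by auto
      qed
      ultimately show "\<exists>T. openin tau T \<and> x \<in> T \<and> T \<subseteq> {x \<in> topspace tau. f x \<in> S}" by blast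
    qed
  qed
  have pz: "1 \<le> gauge N z" by (rule gauge_notin[OF zN])
  define g where "g v = (1 / gauge N z) * f v" for v
  have "linear g" unfolding g_def
    by (rule linearI) (simp_all add: linear_add[OF f(1)] linear_scale[OF f(1)] algebra_simps add_divide_distrib)
  moreover have "continuous_map tau euclideanreal g"
    unfolding g_def by (rule continuous_map_real_mult_left[OF fcont])
  moreover have "g z = 1" using pz f(3) by (simp add: g_def)
  ultimately show ?thesis unfolding dual_def by blast
qed



lemma convex_hull_union_two_rv:
  fixes S T :: "'m::real_vector set"
  assumes "convex S" "S \<noteq> {}" "convex T" "T \<noteq> {}"
  shows "convex hull (S \<union> T) =
    {u *\<^sub>R s + v *\<^sub>R t | u v s t. u \<ge> 0 \<and> v \<ge> 0 \<and> u + v = 1 \<and> s \<in> S \<and> t \<in> T}"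
  (is "?lhs = ?rhs")
proof
  define I :: "nat set" where "I = {1, 2}"
  define s where "s i = (if i = (1::nat) then S else T)" for i
  have "\<Union>(s ` I) = S \<union> T"
    using s_def I_def by auto
  then have "convex hull (\<Union>(s ` I)) = convex hull (S \<union> T)"
    by auto
  moreover have "convex hull \<Union>(s ` I) =
    {\<Sum> i\<in>I. c i *\<^sub>R sa i | c sa. (\<forall>i\<in>I. 0 \<le> c i) \<and> sum c I = 1 \<and> (\<forall>i\<in>I. sa i \<in> s i)}"
      using assms s_def I_def
      by (subst convex_hull_finite_union) auto
  moreover have
    "{\<Sum>i\<in>I. c i *\<^sub>R sa i | c sa. (\<forall>i\<in>I. 0 \<le> c i) \<and> sum c I = 1 \<and> (\<forall>i\<in>I. sa i \<in> s i)} \<le> ?rhs"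
    using s_def I_def by auto
  ultimately show "?lhs \<subseteq> ?rhs" by auto
  {
    fix x
    assume "x \<in> ?rhs"
    then obtain u v s t where *: "x = u *\<^sub>R s + v *\<^sub>R t \<and> u \<ge> 0 \<and> v \<ge> 0 \<and> u + v = 1 \<and> s \<in> S \<and> t \<in> T"
      by auto
    then have "x \<in> convex hull {s, t}"
      using convex_hull_2[of s t] by auto
    then have "x \<in> convex hull (S \<union> T)"
      using * hull_mono[of "{s, t}" "S \<union> T"] by auto
  }
  then show "?lhs \<supseteq> ?rhs" by blast
qed

lemma convex_affine_vimage:
  fixes W :: "'x::real_vector set"
  assumes "convex W" shows "convex {v. c *\<^sub>R v + b \<in> W}"
proof (rule convexI)
  fix p q and u w :: real
  assume pq: "p \<in> {v. c *\<^sub>R v + b \<in> W}" "q \<in> {v. c *\<^sub>R v + b \<in> W}"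
    and u0: "0 \<le> u" and w0: "0 \<le> w" and uw1: "u + w = 1"
  have uw: "0 \<le> u \<and> 0 \<le> w \<and> u + w = 1" using u0 w0 uw1 by simp
  have "u *\<^sub>R (c *\<^sub>R p + b) + w *\<^sub>R (c *\<^sub>R q + b) \<in> W"
    using pq uw by (intro convexD[OF assms]) auto
  moreover have "u *\<^sub>R (c *\<^sub>R p + b) + w *\<^sub>R (c *\<^sub>R q + b) = c *\<^sub>R (u *\<^sub>R p + w *\<^sub>R q) + b"
  proof -
    have "u *\<^sub>R (c *\<^sub>R p + b) + w *\<^sub>R (c *\<^sub>R q + b) = c *\<^sub>R (u *\<^sub>R p + w *\<^sub>R q) + (u + w) *\<^sub>R b"
      by (simp add: algebra_simps)
    then show ?thesis using uw by simp
  qed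
  ultimately show "u *\<^sub>R p + w *\<^sub>R q \<in> {v. c *\<^sub>R v + b \<in> W}" by simp
qed

lemma vec_id1: "u *\<^sub>R (2 *\<^sub>R s + - x) + v *\<^sub>R x = 2 *\<^sub>R (u *\<^sub>R (s - x)) + (u + v) *\<^sub>R (x::'a::real_vector)"
proof -
  have "u *\<^sub>R (2 *\<^sub>R s + - x) + v *\<^sub>R x = (2*u) *\<^sub>R s + (v - u) *\<^sub>R x"
    by (simp add: scaleR_add_right scaleR_diff_right scaleR_diff_left scaleR_scaleR mult.commute algebra_simps)
  moreover have "2 *\<^sub>R (u *\<^sub>R (s - x)) + (u + v) *\<^sub>R x = (2*u) *\<^sub>R s + (v - u) *\<^sub>R x"
    by (simp add: scaleR_diff_right scaleR_add_left scaleR_diff_left scaleR_scaleR) (simp flip: scaleR_diff_left)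
  ultimately show ?thesis by simp
qed
lemma vec_id2: "(1/2) *\<^sub>R (2 *\<^sub>R (u *\<^sub>R (s - x)) + x) + (1/2) *\<^sub>R (2 *\<^sub>R (v *\<^sub>R (t - x)) + x)
              = u *\<^sub>R s + v *\<^sub>R t + (1 - (u + v)) *\<^sub>R (x::'a::real_vector)"
proof -
  have "(1/2) *\<^sub>R (2 *\<^sub>R (u *\<^sub>R (s - x)) + x) + (1/2) *\<^sub>R (2 *\<^sub>R (v *\<^sub>R (t - x)) + x)
     = u *\<^sub>R (s - x) + v *\<^sub>R (t - x) + ((1/2) *\<^sub>R x + (1/2) *\<^sub>R x)"
    by (simp add: scaleR_add_right algebra_simps)
  also have "(1/2) *\<^sub>R x + (1/2) *\<^sub>R x = x" by (simp flip: scaleR_add_left)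
  finally show ?thesis by (simp add: algebra_simps)
qed

lemma dual_linear: "y \<in> dual tau \<Longrightarrow> linear y" by (simp add: dual_def)
lemma dual_cont: "y \<in> dual tau \<Longrightarrow> continuous_map tau euclideanreal y" by (simp add: dual_def)

lemma construct_V:
  fixes tau :: "'x::real_vector topology"
  assumes lcs: "lcs tau" and W: "openin tau W" "convex W" "x \<in> W"
    and y: "y \<in> dual tau" and ya: "y x - y a = 1"
  shows "\<exists>V \<eta>. openin tau V \<and> convex V \<and> x \<in> V \<and> a \<in> V \<and> \<eta> > 0 \<and>
            (\<forall>q\<in>V. q \<notin> W \<longrightarrow> \<eta> \<le> y x - y q)"
proof -
  have top: "topspace tau = UNIV" using lcs by (simp add: lcs_def)
  have yl: "linear y" using dual_linear[OF y] .
  define P where "P = {v. 2 *\<^sub>R v + x \<in> W}"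
  have Po: "openin tau P" unfolding P_def by (rule lcs_open_affine_preimage[OF lcs W(1)])
  have P0: "0 *\<^sub>R (a - x) \<in> P" using W(3) by (simp add: P_def)
  obtain r Ob where r: "r > 0" "openin tau Ob" "a - x \<in> Ob"
      "\<And>c t. \<bar>c - 0\<bar> < r \<and> t \<in> Ob \<Longrightarrow> c *\<^sub>R t \<in> P"
    using lcs_scale_at[OF lcs Po P0] by blast
  define e where "e = r / 4"
  have ypre: "openin tau {w. y w \<in> S}" if "open S" for S
    using openin_continuous_map_preimage[OF dual_cont[OF y], of S] that by (simp add: top)
  define W' where "W' = {w. 2 *\<^sub>R w + (- x) \<in> W} \<inter> {w. y w \<in> {y x - e <..< y x + e}}"
  have W'o: "openin tau W'" unfolding W'_def
    by (intro openin_Int lcs_open_affine_preimage[OF lcs W(1)] ypre) auto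
  have W'c: "convex W'" unfolding W'_def
  proof (rule convex_Int)
    show "convex {w. 2 *\<^sub>R w + - x \<in> W}" by (rule convex_affine_vimage[OF W(2)])
    have "{w. y w \<in> {y x - e<..<y x + e}} = y -` {y x - e<..<y x + e}" by auto
    then show "convex {w. y w \<in> {y x - e<..<y x + e}}"
      by (simp add: convex_linear_vimage[OF yl] convex_real_interval)
  qed
  have xW': "x \<in> W'" using W(3) r(1) by (simp add: W'_def e_def scaleR_2)
  define Ob2 where "Ob2 = Ob \<inter> {t. y t \<in> {..< -1/2}}"
  have Ob2o: "openin tau Ob2" unfolding Ob2_def by (intro openin_Int r(2) ypre) auto
  have "y (a - x) = -1" using ya linear_diff[OF yl] by simp
  then have axOb2: "a - x \<in> Ob2" using r(3) by (simp add: Ob2_def)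
  obtain O' where O': "openin tau O'" "convex O'" "a - x \<in> O'" "O' \<subseteq> Ob2"
    using lcs_convex_nbhd[OF lcs Ob2o axOb2] by blast
  define U where "U = {v. 1 *\<^sub>R v + (- x) \<in> O'}"
  have Uo: "openin tau U" unfolding U_def by (rule lcs_open_affine_preimage[OF lcs O'(1)])
  have Uc: "convex U" unfolding U_def by (rule convex_affine_vimage[OF O'(2)])
  have aU: "a \<in> U" using O'(3) by (simp add: U_def)
  define V where "V = convex hull (W' \<union> U)"
  have Vrep: "V = {u *\<^sub>R s + v *\<^sub>R t | u v s t. u \<ge> 0 \<and> v \<ge> 0 \<and> u + v = 1 \<and> s \<in> W' \<and> t \<in> U}"
    unfolding V_def using W'c Uc xW' aU by (intro convex_hull_union_two_rv) auto
  have Vc: "convex V" unfolding V_def by simp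
  have W'V: "W' \<subseteq> V" and UV: "U \<subseteq> V" unfolding V_def by (auto intro: hull_subset[THEN subsetD])
  have Vo: "openin tau V"
  proof (subst openin_subopen, intro ballI)
    fix q assume "q \<in> V"
    then obtain u v s t where q: "q = u *\<^sub>R s + v *\<^sub>R t" "u \<ge> 0" "v \<ge> 0" "u + v = 1" "s \<in> W'" "t \<in> U"
      unfolding Vrep by blast
    show "\<exists>T. openin tau T \<and> q \<in> T \<and> T \<subseteq> V"
    proof (cases "u = 0")
      case True then show ?thesis using q Uo UV by (intro exI[of _ U]) auto
    next
      case False
      define T where "T = {q'. (1/u) *\<^sub>R q' + (- ((v/u) *\<^sub>R t)) \<in> W'}"
      have "openin tau T" unfolding T_def by (rule lcs_open_affine_preimage[OF lcs W'o])
      moreover have "q \<in> T" using q False by (simp add: T_def algebra_simps)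
      moreover have "T \<subseteq> V"
      proof
        fix q' assume "q' \<in> T"
        then have "(1/u) *\<^sub>R q' - (v/u) *\<^sub>R t \<in> W'" by (simp add: T_def)
        moreover have "q' = u *\<^sub>R ((1/u) *\<^sub>R q' - (v/u) *\<^sub>R t) + v *\<^sub>R t"
          using False by (simp add: algebra_simps)
        ultimately show "q' \<in> V" unfolding Vrep using q by blast
      qed
      ultimately show ?thesis by blast
    qed
  qed
  have key: "r/4 \<le> y x - y q" if qV: "q \<in> V" and qW: "q \<notin> W" for q
  proof -
    obtain u v s t where q: "q = u *\<^sub>R s + v *\<^sub>R t" "u \<ge> 0" "v \<ge> 0" "u + v = 1" "s \<in> W'" "t \<in> U"
      using qV unfolding Vrep by blast
    have ys: "y x - e < y s" "y s < y x + e" using q(5) by (auto simp: W'_def)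
    have tO: "t - x \<in> O'" using q(6) by (simp add: U_def)
    then have "y (t - x) < -1/2" using O'(4) by (auto simp: Ob2_def)
    then have yt: "y t - y x < -1/2" using linear_diff[OF yl] by simp
    have yq: "y q = u * y s + v * y t" using q(1) linear_add[OF yl] linear_scale[OF yl] by simp
    show ?thesis
    proof (cases "v < r")
      case True
      have "v *\<^sub>R (t - x) \<in> P" using r(4)[of v "t - x"] True q(3) tO O'(4) by (auto simp: Ob2_def)
      then have A: "2 *\<^sub>R (v *\<^sub>R (t - x)) + x \<in> W" by (simp add: P_def)
      have s2: "2 *\<^sub>R s + - x \<in> W" using q(5) by (simp add: W'_def)
      have "u *\<^sub>R (2 *\<^sub>R s + - x) + v *\<^sub>R x \<in> W"
        by (rule convexD[OF W(2) s2 W(3) q(2) q(3) q(4)])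
      then have B: "2 *\<^sub>R (u *\<^sub>R (s - x)) + x \<in> W"
      proof -
        have "u *\<^sub>R (2 *\<^sub>R s + - x) + v *\<^sub>R x = 2 *\<^sub>R (u *\<^sub>R (s - x)) + (u + v) *\<^sub>R x"
          by (rule vec_id1)
        then show ?thesis using \<open>u *\<^sub>R (2 *\<^sub>R s + - x) + v *\<^sub>R x \<in> W\<close> q(4) by simp
      qed
      have "(1/2) *\<^sub>R (2 *\<^sub>R (u *\<^sub>R (s - x)) + x) + (1/2) *\<^sub>R (2 *\<^sub>R (v *\<^sub>R (t - x)) + x) \<in> W"
        by (rule convexD[OF W(2) B A]) auto
      moreover have "(1/2) *\<^sub>R (2 *\<^sub>R (u *\<^sub>R (s - x)) + x) + (1/2) *\<^sub>R (2 *\<^sub>R (v *\<^sub>R (t - x)) + x) = q"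
      proof -
        have "(1/2) *\<^sub>R (2 *\<^sub>R (u *\<^sub>R (s - x)) + x) + (1/2) *\<^sub>R (2 *\<^sub>R (v *\<^sub>R (t - x)) + x)
              = u *\<^sub>R s + v *\<^sub>R t + (1 - (u + v)) *\<^sub>R x"
          by (rule vec_id2)
        then show ?thesis using q(1,4) by simp
      qed
      ultimately show ?thesis using qW by simp
    next
      case False
      have e1: "u * (y x - y s) + v * (y x - y t) = (u + v) * y x - (u * y s + v * y t)"
        by (simp add: algebra_simps)
      have eq: "y x - y q = u * (y x - y s) + v * (y x - y t)" using e1 q(4) yq by simp
      have h1: "- e \<le> y x - y s" using ys(2) by linarith
      have m1: "u * (- e) \<le> u * (y x - y s)" using mult_left_mono[OF h1 q(2)] .
      have u1: "u \<le> 1" using q(3,4) by linarith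
      have e0: "0 \<le> e" using r(1) unfolding e_def by simp
      have m2: "u * e \<le> 1 * e" using mult_right_mono[OF u1 e0] .
      have h2: "1/2 \<le> y x - y t" using yt by linarith
      have m3: "v * (1/2) \<le> v * (y x - y t)" using mult_left_mono[OF h2 q(3)] .
      have "\<not> v < r" using False .
      then show ?thesis using eq m1 m2 m3 unfolding e_def by linarith
    qed
  qed
  have r4: "r/4 > 0" using r(1) by simp
  have "x \<in> V" using W'V xW' by blast
  moreover have "a \<in> V" using UV aU by blast
  ultimately show ?thesis using Vo Vc r4 key by blast
qed



lemma mono_bound:
  fixes l uu ua ub au bu aa ab ba bb s fx fu :: real
  assumes "0 \<le> l" "l \<le> 1" "0 \<le> uu - ua - au + aa" "0 \<le> uu - ub - bu + bb"
  shows "s*(fx - fu) - l*(1-l)*(bb - ba - ab + aa) \<le>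
    ((1-l)*((1-l)*aa + l*ab) + l*((1-l)*ba + l*bb) + s*fx) - ((1-l)*ua + l*ub) - ((1-l)*au + l*bu + s*fu) + uu"
proof -
  have eq: "((1-l)*((1-l)*aa + l*ab) + l*((1-l)*ba + l*bb) + s*fx) - ((1-l)*ua + l*ub) - ((1-l)*au + l*bu + s*fu) + uu
     = (1-l)*(uu - ua - au + aa) + l*(uu - ub - bu + bb) - l*(1-l)*(bb - ba - ab + aa) + s*(fx - fu)"
    by algebra
  have "0 \<le> (1-l)*(uu - ua - au + aa)" using assms by simp
  moreover have "0 \<le> l*(uu - ub - bu + bb)" using assms by simp
  ultimately show ?thesis unfolding eq by linarith
qed

lemma lin2: "linear g \<Longrightarrow> g (c *\<^sub>R p + d *\<^sub>R q) = c * g p + d * g q"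
  by (simp add: linear_add linear_scale)

lemma dual_comb:
  assumes "f \<in> dual tau" "g \<in> dual tau" "h \<in> dual tau"
  shows "(\<lambda>v. c1 * f v + c2 * g v + c3 * h v) \<in> dual tau"
proof -
  have l: "linear f" "linear g" "linear h" using assms by (auto simp: dual_def)
  have "linear (\<lambda>v. c1 * f v + c2 * g v + c3 * h v)"
    by (rule linearI) (simp_all add: linear_add[OF l(1)] linear_add[OF l(2)] linear_add[OF l(3)]
        linear_scale[OF l(1)] linear_scale[OF l(2)] linear_scale[OF l(3)] algebra_simps)
  moreover have "continuous_map tau euclideanreal (\<lambda>v. c1 * f v + c2 * g v + c3 * h v)"
    using assms unfolding dual_def
    by (intro continuous_map_add continuous_map_real_mult_left) auto
  ultimately show ?thesis by (simp add: dual_def)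
qed

lemma part1:
  fixes tau :: "'x::real_vector topology" and T :: "('x \<times> ('x \<Rightarrow> real)) set"
  assumes lcs: "lcs tau" and TM: "T \<in> MX tau"
    and H: "\<forall>V. openin tau V \<and> convex V \<and> V \<inter> Domain T \<noteq> {} \<longrightarrow>
              prX_lt tau T V \<inter> V \<subseteq> tau closure_of (Domain T)"
  shows "convex (tau closure_of (Domain T))"
proof (rule ccontr)
  define C where "C = tau closure_of (Domain T)"
  have top: "topspace tau = UNIV" using lcs by (simp add: lcs_def)
  have DC: "Domain T \<subseteq> C" unfolding C_def by (rule closure_of_subset) (simp add: top)
  assume "\<not> convex (tau closure_of (Domain T))"
  then obtain a' b' l where ab': "a' \<in> C" "b' \<in> C" "0 \<le> l" "l \<le> 1" "(1 - l) *\<^sub>R a' + l *\<^sub>R b' \<notin> C"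
    unfolding convex_alt C_def by blast
  define G where "G = topspace tau - C"
  have Go: "openin tau G" unfolding G_def C_def by (intro openin_diff) auto
  have Fc: "continuous_map (prod_topology tau tau) tau (\<lambda>z. (1 - l) *\<^sub>R fst z + l *\<^sub>R snd z)"
  proof -
    have c1: "continuous_map (prod_topology tau tau) tau (\<lambda>z. (1 - l) *\<^sub>R fst z + 0)"
      using continuous_map_compose[OF continuous_map_fst lcs_affine_cont[OF lcs, of "1 - l" 0]]
      by (simp add: o_def)
    have c2: "continuous_map (prod_topology tau tau) tau (\<lambda>z. l *\<^sub>R snd z + 0)"
      using continuous_map_compose[OF continuous_map_snd lcs_affine_cont[OF lcs, of l 0]]
      by (simp add: o_def)
    have "continuous_map (prod_topology tau tau) (prod_topology tau tau)
            (\<lambda>z. ((1 - l) *\<^sub>R fst z, l *\<^sub>R snd z))"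
      using c1 c2 by (intro continuous_map_pairedI) auto
    then have "continuous_map (prod_topology tau tau) tau
        ((\<lambda>(x, y). x + y) \<circ> (\<lambda>z. ((1 - l) *\<^sub>R fst z, l *\<^sub>R snd z)))"
      by (rule continuous_map_compose[OF _ lcs_add_cont[OF lcs]])
    then show ?thesis by (simp add: o_def)
  qed
  have "openin (prod_topology tau tau) {z \<in> topspace (prod_topology tau tau).
          (1 - l) *\<^sub>R fst z + l *\<^sub>R snd z \<in> G}"
    by (rule openin_continuous_map_preimage[OF Fc Go])
  then have "openin (prod_topology tau tau) {z. (1 - l) *\<^sub>R fst z + l *\<^sub>R snd z \<in> G}"
    by (simp add: top)
  moreover have "(a', b') \<in> {z. (1 - l) *\<^sub>R fst z + l *\<^sub>R snd z \<in> G}"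
    using ab'(5) by (simp add: G_def top)
  ultimately obtain O1 O2 where O12: "openin tau O1" "openin tau O2" "a' \<in> O1" "b' \<in> O2"
      "O1 \<times> O2 \<subseteq> {z. (1 - l) *\<^sub>R fst z + l *\<^sub>R snd z \<in> G}"
    unfolding openin_prod_topology_alt by meson
  obtain a where a: "a \<in> Domain T" "a \<in> O1"
    using ab'(1) O12(1,3) unfolding C_def in_closure_of by blast
  obtain b where b: "b \<in> Domain T" "b \<in> O2"
    using ab'(2) O12(2,4) unfolding C_def in_closure_of by blast
  define x where "x = (1 - l) *\<^sub>R a + l *\<^sub>R b"
  have xG: "x \<in> G" using O12(5) a(2) b(2) unfolding x_def by auto
  then have xC: "x \<notin> C" by (simp add: G_def)
  obtain W where W: "openin tau W" "convex W" "x \<in> W" "W \<subseteq> G"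
    using lcs_convex_nbhd[OF lcs Go xG] by blast
  have WD: "u \<notin> W" if "u \<in> Domain T" for u using that DC W(4) by (auto simp: G_def)
  have "x - a \<noteq> 0" using xC a(1) DC by auto
  then obtain f where f: "f \<in> dual tau" "f (x - a) = 1" using lcs_sep_functional[OF lcs] by blast
  have fl: "linear f" using f(1) by (simp add: dual_def)
  have fxa: "f x - f a = 1" using f(2) linear_diff[OF fl] by simp
  obtain V \<eta> where V: "openin tau V" "convex V" "x \<in> V" "a \<in> V" "\<eta> > 0"
      "\<And>q. q \<in> V \<Longrightarrow> q \<notin> W \<Longrightarrow> \<eta> \<le> f x - f q"
    using construct_V[OF lcs W(1-3) f(1) fxa] by blast
  have VD: "V \<inter> Domain T \<noteq> {}" using V(4) a(1) by blast
  obtain as where aT: "(a, as) \<in> T" using a(1) by blast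
  obtain bs where bT: "(b, bs) \<in> T" using b(1) by blast
  have Tsub: "T \<subseteq> UNIV \<times> dual tau" and mono: "monotone_op T" using TM by (auto simp: MX_def)
  have asd: "as \<in> dual tau" and bsd: "bs \<in> dual tau" using aT bT Tsub by auto
  have asl: "linear as" and bsl: "linear bs" using asd bsd by (auto simp: dual_def)
  have monoD: "0 \<le> us u - us v - vs u + vs v" if "(u, us) \<in> T" "(v, vs) \<in> T" for u us v vs
    using mono that unfolding monotone_op_def by fast
  define K where "K = l * (1 - l) * (bs b - bs a - as b + as a)"
  define s where "s = (1 + \<bar>K\<bar>) / \<eta>"
  have s0: "0 \<le> s" using V(5) by (simp add: s_def)
  have seta: "s * \<eta> = 1 + \<bar>K\<bar>" using V(5) by (simp add: s_def)
  define xs where "xs = (\<lambda>v. (1 - l) * as v + l * bs v + s * f v)"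
  have xsd: "xs \<in> dual tau" unfolding xs_def by (rule dual_comb[OF asd bsd f(1)])
  have bound: "us x + xs u - us u \<le> xs x - 1" if uT: "(u, us) \<in> T" and uV: "u \<in> V" for u us
  proof -
    have usd: "us \<in> dual tau" using uT Tsub by auto
    have usl: "linear us" using usd by (simp add: dual_def)
    have fu: "\<eta> \<le> f x - f u" using V(6)[OF uV WD] uT by blast
    have sfu: "s * \<eta> \<le> s * (f x - f u)" using mult_left_mono[OF fu s0] .
    have m1: "0 \<le> us u - us a - as u + as a" using monoD[OF uT aT] .
    have m2: "0 \<le> us u - us b - bs u + bs b" using monoD[OF uT bT] .
    have ux: "us x = (1 - l) * us a + l * us b" unfolding x_def by (rule lin2[OF usl])
    have ax: "as x = (1 - l) * as a + l * as b" unfolding x_def by (rule lin2[OF asl])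
    have bx: "bs x = (1 - l) * bs a + l * bs b" unfolding x_def by (rule lin2[OF bsl])
    have xsx: "xs x = (1 - l) * ((1 - l) * as a + l * as b) + l * ((1 - l) * bs a + l * bs b) + s * f x"
      by (simp add: xs_def ax bx)
    have xsu: "xs u = (1 - l) * as u + l * bs u + s * f u" by (simp add: xs_def)
    have "s*(f x - f u) - l*(1-l)*(bs b - bs a - as b + as a) \<le>
      ((1-l)*((1-l)*as a + l*as b) + l*((1-l)*bs a + l*bs b) + s*f x) - ((1-l)*us a + l*us b)
        - ((1-l)*as u + l*bs u + s*f u) + us u"
      by (rule mono_bound[OF ab'(3,4) m1 m2])
    then have "s*(f x - f u) - K \<le> xs x - us x - xs u + us u"
      unfolding K_def xsx xsu ux by simp
    moreover have "K \<le> \<bar>K\<bar>" by simp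
    ultimately show ?thesis using sfu seta by linarith
  qed
  have "fitz (restr T V) (x, xs) \<le> ereal (xs x - 1)"
    unfolding fitz_def restr_def
  proof (rule Sup_least)
    fix r assume "r \<in> (\<lambda>(u, us). ereal (us (fst (x, xs)) + snd (x, xs) u - us u)) ` (T \<inter> V \<times> UNIV)"
    then obtain u us where "(u, us) \<in> T" "u \<in> V" "r = ereal (us x + xs u - us u)" by auto
    then show "r \<le> ereal (xs x - 1)" using bound by simp
  qed
  also have "\<dots> < ereal (cpl (x, xs))" by (simp add: cpl_def)
  finally have "x \<in> prX_lt tau T V" unfolding prX_lt_def using xsd by blast
  then have "x \<in> C" using H V(1,2,3) VD unfolding C_def by blast
  then show False using xC by simp
qed


theorem theorem2p7:
  fixes tau :: "'x::real_vector topology"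
    and T :: "('x \<times> ('x \<Rightarrow> real)) set"
  assumes "lcs tau" and "T \<in> MX tau"
  shows "((\<forall>V. openin tau V \<and> convex V \<and> V \<inter> Domain T \<noteq> {} \<longrightarrow>
              prX_lt tau T V \<inter> V \<subseteq> tau closure_of (Domain T))
            \<longrightarrow> convex (tau closure_of (Domain T)))
       \<and> (locatable tau T (tau closure_of (Domain T)) \<longrightarrow> convex (tau closure_of (Domain T)))
       \<and> (locally_NI tau T \<longrightarrow> convex (tau closure_of (Domain T)))"
proof (intro conjI impI)
  show "convex (tau closure_of (Domain T))"
    if "\<forall>V. openin tau V \<and> convex V \<and> V \<inter> Domain T \<noteq> {} \<longrightarrow>
              prX_lt tau T V \<inter> V \<subseteq> tau closure_of (Domain T)"
    using part1[OF assms that] .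
next
  assume L: "locatable tau T (tau closure_of (Domain T))"
  have "prX_lt tau T V \<inter> V \<subseteq> tau closure_of (Domain T)"
    if "openin tau V \<and> convex V \<and> V \<inter> Domain T \<noteq> {}" for V
  proof -
    have "prX_le tau T V \<inter> V \<subseteq> tau closure_of (Domain T)"
      using L that unfolding locatable_def locates_def by blast
    moreover have "prX_lt tau T V \<subseteq> prX_le tau T V"
      unfolding prX_lt_def prX_le_def by (auto intro: less_imp_le)
    ultimately show ?thesis by blast
  qed
  then show "convex (tau closure_of (Domain T))" using part1[OF assms] by blast
next
  assume L: "locally_NI tau T"
  have "prX_lt tau T V \<inter> V \<subseteq> tau closure_of (Domain T)"
    if "openin tau V \<and> convex V \<and> V \<inter> Domain T \<noteq> {}" for V
  proof -
    have NI: "V_NI tau V T" using L that unfolding locally_NI_def by blast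
    have "prX_lt tau T V \<inter> V = {}"
    proof (rule ccontr)
      assume "prX_lt tau T V \<inter> V \<noteq> {}"
      then obtain x xs where "x \<in> V" "xs \<in> dual tau" "fitz (restr T V) (x, xs) < ereal (cpl (x, xs))"
        unfolding prX_lt_def by blast
      then show False using NI unfolding V_NI_def by (meson not_le)
    qed
    then show ?thesis by blast
  qed
  then show "convex (tau closure_of (Domain T))" using part1[OF assms] by blast
qed

end
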